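(* Let $m\ge1$ and $m_0$ be integers, and let $F(q)=(\gamma(t,q)-1)^m/q^{m_0}$. Then $$0=-q^{m-m_0}+\beta(m;t,q)\,F-t^mq^{m+m_0}F^2.$$
   Context: $\gamma(t,q)=\sum_{n\ge0}\gamma_n(t)q^n$ where $\gamma_n(t)=\sum_{k=0}^{n}\binom{n}{k}\binom{n-1}{k}\frac{1}{k+1}t^k$ are the Narayana polynomials (formal power series in $q$; $F$ is a formal Laurent series). For $0\le d\le m-1$ let $\rho(m;t,d)=\frac{m}{m-d}\sum_{i=0}^{d}\binom{m-1-d+i}{i}\binom{m-1-i}{d-i}t^i$ and $\rho(m;t,m)=1+t^m$; set $\beta(m;t,q)=\sum_{d=0}^{m}\rho(m;t,d)(-q)^d$. *)

theory Defs
  imports "HOL-Computational_Algebra.Formal_Laurent_Series"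
begin

text \<open>Narayana polynomial gamma_n(t) = sum_{k=0}^n C(n,k) C(n-1,k) t^k/(k+1), with C(n-1,k) read
  as the usual binomial (so gamma_0 = 1).\<close>
definition narayana :: "nat \<Rightarrow> 'a::field_char_0 \<Rightarrow> 'a" where
  "narayana n t = (\<Sum>k=0..n. of_nat ((n choose k) * ((n - 1) choose k)) / of_nat (k + 1) * t ^ k)"

definition gammaF :: "'a::field_char_0 \<Rightarrow> 'a fps" where
  "gammaF t = Abs_fps (\<lambda>n. narayana n t)"

definition rho :: "nat \<Rightarrow> 'a::field_char_0 \<Rightarrow> nat \<Rightarrow> 'a" where
  "rho m t d = (if d = m then 1 + t ^ m
     else of_nat m / of_nat (m - d) *
       (\<Sum>i=0..d. of_nat (((m - 1 - d + i) choose i) * ((m - 1 - i) choose (d - i))) * t ^ i))"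

definition betaF :: "nat \<Rightarrow> 'a::field_char_0 \<Rightarrow> 'a fps" where
  "betaF m t = (\<Sum>d=0..m. fps_const (rho m t d) * (- fps_X) ^ d)"

definition FF :: "nat \<Rightarrow> int \<Rightarrow> 'a::field_char_0 \<Rightarrow> 'a fls" where
  "FF m m0 t = fls_shift m0 (fps_to_fls ((gammaF t - 1) ^ m))"

end

theory Submission
  imports Defs
begin

lemma chooseL1: "(of_nat (a choose (Suc k)) :: 'a::field_char_0) = of_nat (a choose k) * (of_nat a - of_nat k) / of_nat (Suc k)"
proof -
  have "of_nat (Suc k) * ((of_nat a :: 'a) gchoose (Suc k)) = (of_nat a - of_nat k) * (of_nat a gchoose k)"
    using gbinomial_mult_1[of "of_nat a :: 'a" k] by (simp add: algebra_simps)
  then show ?thesis by (simp add: binomial_gbinomial field_simps del: of_nat_Suc)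
qed

lemma chooseL2: "(of_nat (a choose k) :: 'a::field_char_0) = of_nat (Suc a choose k) * (of_nat (Suc a) - of_nat k) / of_nat (Suc a)"
proof -
  have sa: "(of_nat (Suc a) :: 'a) - 1 = of_nat a" by simp
  have e: "(of_nat (Suc a) - of_nat k) * (of_nat (Suc a choose k) :: 'a) = of_nat (Suc a) * of_nat (a choose k)"
    using gbinomial_absorb_comp[of "of_nat (Suc a)::'a" k] sa by (simp add: binomial_gbinomial del: of_nat_Suc)
  have nz: "(of_nat (Suc a) :: 'a) \<noteq> 0" by (simp del: of_nat_Suc)
  show ?thesis using e nz by (simp add: eq_divide_eq mult.commute del: of_nat_Suc)
qed

definition nc :: "nat \<Rightarrow> nat \<Rightarrow> 'a::field_char_0" where
  "nc n k = of_nat (n choose k) * of_nat ((n - 1) choose k) / of_nat (k + 1)"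

lemma nc_gen:
  "(of_nat (N+4) :: 'a::field_char_0) * nc (N+3) (k+2) =
    of_nat (2*N+5) * (nc (N+2) (k+2) + nc (N+2) (k+1))
    - of_nat (N+1) * (nc (N+1) (k+2) - 2 * nc (N+1) (k+1) + nc (N+1) k)"
proof -
  define D where "D = (of_nat (Suc (Suc (Suc N)) choose k) :: 'a)"
  define x where "x = (of_nat N :: 'a)"
  define y where "y = (of_nat k :: 'a)"
  have "x + 1 = of_nat (N+1)" "x + 2 = of_nat (N+2)" "x + 3 = of_nat (N+3)" "y + 1 = of_nat (k+1)" "y + 2 = of_nat (k+2)"
     "y + 3 = of_nat (k+3)"
    by (simp_all add: x_def y_def)
  then have nz: "x + 1 \<noteq> 0" "x + 2 \<noteq> 0" "x + 3 \<noteq> 0" "y + 1 \<noteq> 0" "y + 2 \<noteq> 0" "y + 3 \<noteq> 0"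
    by (simp_all only: of_nat_eq_0_iff)
  have d2: "(of_nat (Suc (Suc N) choose k) :: 'a) = D * (x + 3 - y) / (x + 3)"
    using chooseL2[where 'a='a, of "Suc (Suc N)" k] unfolding D_def x_def y_def by (simp add: algebra_simps)
  have d1: "(of_nat (Suc N choose k) :: 'a) = D * (x + 3 - y) / (x + 3) * (x + 2 - y) / (x + 2)"
    using chooseL2[where 'a='a, of "Suc N" k] d2 unfolding x_def y_def by (simp add: algebra_simps)
  have d0: "(of_nat (N choose k) :: 'a) = D * (x + 3 - y) / (x + 3) * (x + 2 - y) / (x + 2) * (x + 1 - y) / (x + 1)"
    using chooseL2[where 'a='a, of "N" k] d1 unfolding x_def y_def by (simp add: algebra_simps)
  have l1: "\<And>a. (of_nat (a choose Suc k) :: 'a) = of_nat (a choose k) * (of_nat a - y) / (y + 1)"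
    unfolding y_def by (simp add: chooseL1 add.commute)
  have l2: "\<And>a. (of_nat (a choose Suc (Suc k)) :: 'a) = of_nat (a choose k) * (of_nat a - y) / (y + 1) * (of_nat a - y - 1) / (y + 2)"
    unfolding y_def by (simp add: chooseL1 add.commute diff_diff_eq)
  have e: "N + 3 = Suc (Suc (Suc N))" "N + 2 = Suc (Suc N)" "N + 1 = Suc N" "k + 2 = Suc (Suc k)" "k + 1 = Suc k" by simp_all
  have o: "(of_nat (Suc (Suc (Suc N))) :: 'a) = x + 3" "(of_nat (Suc (Suc N)) :: 'a) = x + 2" "(of_nat (Suc N) :: 'a) = x + 1"
    "(of_nat N :: 'a) = x" "(of_nat (N + 4) :: 'a) = x + 4" "(of_nat (2 * N + 5) :: 'a) = 2 * x + 5"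
    "(of_nat (Suc (Suc k) + 1) :: 'a) = y + 3" "(of_nat (Suc k + 1) :: 'a) = y + 2" "(of_nat (k + 1) :: 'a) = y + 1"
    "(of_nat (Suc k) :: 'a) = y + 1" "(of_nat (Suc (Suc k)) :: 'a) = y + 2" "(of_nat (Suc (Suc (Suc k))) :: 'a) = y + 3"
    by (simp_all add: x_def y_def)
  show ?thesis
    unfolding nc_def e
    apply (simp only: l1 l2 diff_Suc_1)
    apply (simp only: d0 d1 d2 D_def[symmetric] o)
    apply (simp add: divide_simps nz)
    apply (simp add: algebra_simps)
    done
qed

lemma nc_0: "nc a 0 = 1"
  by (simp add: nc_def)

lemma nc_1: "nc (Suc a) 1 = (of_nat (Suc a) * of_nat a / 2 :: 'a::field_char_0)"
  by (simp add: nc_def)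

lemma nc_zero: assumes "1 \<le> a" "a \<le> k" shows "nc a k = 0"
proof -
  have "a - 1 < k" using assms by arith
  then have "(a - 1) choose k = 0" by simp
  then show ?thesis by (simp add: nc_def)
qed

lemma nc_k0: "(of_nat (N+4) :: 'a::field_char_0) * nc (N+3) 0 =
    of_nat (2*N+5) * (nc (N+2) 0) - of_nat (N+1) * (nc (N+1) 0)"
  by (simp add: nc_0 algebra_simps)

lemma nc_k1: "(of_nat (N+4) :: 'a::field_char_0) * nc (N+3) 1 =
    of_nat (2*N+5) * (nc (N+2) 1 + nc (N+2) 0) - of_nat (N+1) * (nc (N+1) 1 - 2 * nc (N+1) 0)"
proof -
  have e: "N + 3 = Suc (N + 2)" "N + 2 = Suc (N+1)" "N + 1 = Suc N" by simp_all
  show ?thesis unfolding e nc_1 nc_0 by (simp add: field_simps)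
qed

lemma narayana_nc: "narayana n t = (\<Sum>k=0..n. nc n k * t ^ k)"
  by (simp add: narayana_def nc_def)

lemma sum_ext: "n \<le> M \<Longrightarrow> (\<forall>k. n < k \<longrightarrow> f k = 0) \<Longrightarrow>
   (\<Sum>k=0..n. f k * (t::'a::comm_ring_1) ^ k) = (\<Sum>k=0..M. f k * t ^ k)"
  by (rule sum.mono_neutral_left) auto

lemma sum_shift: "f M = 0 \<Longrightarrow> (t::'a::comm_ring_1) * (\<Sum>k=0..M. f k * t ^ k) =
   (\<Sum>k=0..M. (if k = 0 then 0 else f (k - 1)) * t ^ k)"
proof (cases M)
  case 0
  assume "f M = 0" then show ?thesis using 0 by simp
next
  case (Suc M')
  assume "f M = 0"
  have r: "(\<Sum>k=0..Suc M'. (if k = 0 then 0 else f (k - 1)) * t ^ k) = (\<Sum>k=0..M'. f k * t ^ Suc k)"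
    by (subst sum.atLeast0_atMost_Suc_shift) simp
  have l: "t * (\<Sum>k=0..Suc M'. f k * t ^ k) = (\<Sum>k=0..M'. f k * t ^ Suc k)"
    using \<open>f M = 0\<close> unfolding Suc by (simp add: sum_distrib_left sum.atLeast0_atMost_Suc algebra_simps)
  show ?thesis unfolding Suc using r l by simp
qed

definition sh :: "(nat \<Rightarrow> 'a::zero) \<Rightarrow> nat \<Rightarrow> 'a" where
  "sh f k = (if k = 0 then 0 else f (k - 1))"

lemma nc_pt: "(of_nat (N+4) :: 'a::field_char_0) * nc (N+3) k =
    of_nat (2*N+5) * (nc (N+2) k + sh (nc (N+2)) k)
    - of_nat (N+1) * (nc (N+1) k - 2 * sh (nc (N+1)) k + sh (sh (nc (N+1))) k)"
proof (cases k)
  case 0 then show ?thesis using nc_k0[of N] by (simp add: sh_def)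
next
  case (Suc j) note kj = this
  show ?thesis
  proof (cases j)
    case 0 then show ?thesis using nc_k1[of N] kj by (simp add: sh_def)
  next
    case (Suc i)
    then show ?thesis using nc_gen[of N i] kj by (simp add: sh_def)
  qed
qed

lemma nar_rec: "(of_nat (N+4) :: 'a::field_char_0) * narayana (N+3) t =
   (1 + t) * of_nat (2*N+5) * narayana (N+2) t - (1 - t)^2 * of_nat (N+1) * narayana (N+1) t"
proof -
  define M where "M = N + 5"
  define f3 where "f3 = (nc (N+3) :: nat \<Rightarrow> 'a)"
  define f2 where "f2 = (nc (N+2) :: nat \<Rightarrow> 'a)"
  define f1 where "f1 = (nc (N+1) :: nat \<Rightarrow> 'a)"
  have g3: "narayana (N+3) t = (\<Sum>k=0..M. f3 k * t ^ k)"
    unfolding narayana_nc f3_def M_def by (rule sum_ext) (auto intro: nc_zero)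
  have g2: "narayana (N+2) t = (\<Sum>k=0..M. f2 k * t ^ k)"
    unfolding narayana_nc f2_def M_def by (rule sum_ext) (auto intro: nc_zero)
  have g1: "narayana (N+1) t = (\<Sum>k=0..M. f1 k * t ^ k)"
    unfolding narayana_nc f1_def M_def by (rule sum_ext) (auto intro: nc_zero)
  have s2: "t * (\<Sum>k=0..M. f2 k * t ^ k) = (\<Sum>k=0..M. sh f2 k * t ^ k)"
    unfolding sh_def by (rule sum_shift) (simp add: f2_def M_def nc_zero)
  have s1: "t * (\<Sum>k=0..M. f1 k * t ^ k) = (\<Sum>k=0..M. sh f1 k * t ^ k)"
    unfolding sh_def by (rule sum_shift) (simp add: f1_def M_def nc_zero)
  have s11: "t * (\<Sum>k=0..M. sh f1 k * t ^ k) = (\<Sum>k=0..M. sh (sh f1) k * t ^ k)"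
    by (subst (2) sh_def, rule sum_shift) (simp add: sh_def f1_def M_def nc_zero)
  have "(1 + t) * of_nat (2*N+5) * narayana (N+2) t - (1 - t)^2 * of_nat (N+1) * narayana (N+1) t
     = of_nat (2*N+5) * ((\<Sum>k=0..M. f2 k * t ^ k) + t * (\<Sum>k=0..M. f2 k * t ^ k))
       - of_nat (N+1) * ((\<Sum>k=0..M. f1 k * t ^ k) - 2 * (t * (\<Sum>k=0..M. f1 k * t ^ k))
           + t * (t * (\<Sum>k=0..M. f1 k * t ^ k)))"
    unfolding g2 g1 by (simp add: algebra_simps power2_eq_square)
  also have "\<dots> = (\<Sum>k=0..M. (of_nat (2*N+5) * (f2 k + sh f2 k)
       - of_nat (N+1) * (f1 k - 2 * sh f1 k + sh (sh f1) k)) * t ^ k)"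
    unfolding s1 s2 s11
    by (simp add: sum.distrib sum_subtractf sum_distrib_left algebra_simps)
  also have "\<dots> = (\<Sum>k=0..M. (of_nat (N+4) * f3 k) * t ^ k)"
    unfolding f1_def f2_def f3_def by (simp only: nc_pt[where 'a='a, of N, symmetric])
  also have "\<dots> = of_nat (N+4) * narayana (N+3) t"
    unfolding g3 by (simp add: sum_distrib_left algebra_simps)
  finally show ?thesis by simp
qed

lemma nar0: "narayana 0 t = 1" by (simp add: narayana_def)
lemma nar1: "narayana 1 t = 1" by (simp add: narayana_def)
lemma nar2: "narayana 2 t = 1 + t"
  by (simp add: narayana_def numeral_2_eq_2)
lemma nar1': "narayana (Suc 0) t = 1" by (simp add: narayana_def)
lemma nar2': "narayana (Suc (Suc 0)) t = 1 + t" using nar2 by (simp add: numeral_2_eq_2)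

definition GG :: "'a::field_char_0 \<Rightarrow> 'a fps" where "GG t = gammaF t - 1"
definition SS :: "'a::field_char_0 \<Rightarrow> 'a fps" where
  "SS t = fps_const (2*t) * fps_X * GG t + fps_const (1+t) * fps_X - 1"
definition DD :: "'a::field_char_0 \<Rightarrow> 'a fps" where
  "DD t = 1 - fps_const (2*(1+t)) * fps_X + fps_const ((1-t)^2) * fps_X^2"

lemma GG_nth: "GG t $ n = (if n = 0 then 0 else narayana n t)"
  by (simp add: GG_def gammaF_def nar0)

lemma SS_nth: "SS t $ n = (if n = 0 then -1 else if n = 1 then 1 + t else 2 * t * narayana (n - 1) t)"
proof -
  have "SS t = fps_const (2*t) * (fps_X * GG t) + fps_const (1+t) * fps_X - 1"
    by (simp add: SS_def mult.assoc)
  then show ?thesis by (auto simp: GG_nth)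
qed

lemma DD_mult_nth: "(DD t * F) $ n = F $ n - 2 * (1 + t) * (if n = 0 then 0 else F $ (n - 1))
   + (1 - t)^2 * (if n < 2 then 0 else F $ (n - 2))"
proof -
  have "DD t * F = F - fps_const (2*(1+t)) * (fps_X * F) + fps_const ((1-t)^2) * (fps_X^2 * F)"
    by (simp add: DD_def algebra_simps)
  then show ?thesis by (simp add: fps_X_power_mult_nth)
qed

lemma DD_nth: "DD t $ n = (if n = 0 then 1 else if n = 1 then - 2 * (1 + t) else if n = 2 then (1 - t)^2 else 0)"
  using DD_mult_nth[of t 1 n] by (auto simp: numeral_2_eq_2)

lemma DD_deriv: "fps_deriv (DD t) = fps_const (- 2 * (1 + t)) + fps_const (2 * (1 - t)^2) * fps_X"
proof (rule fps_ext)
  fix n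
  show "fps_deriv (DD t) $ n = (fps_const (- 2 * (1 + t)) + fps_const (2 * (1 - t)^2) * fps_X) $ n"
    by (cases n) (auto simp: DD_nth fps_deriv_nth numeral_2_eq_2)
qed

lemma SS_ode: "fps_const 2 * (DD t * fps_deriv (SS t)) = fps_deriv (DD t) * SS t"
proof (rule fps_ext)
  fix n
  have r: "fps_deriv (DD t) * SS t = fps_const (- 2 * (1 + t)) * SS t + fps_const (2 * (1 - t)^2) * (fps_X * SS t)"
    by (simp add: DD_deriv algebra_simps)
  have l: "(fps_const 2 * (DD t * fps_deriv (SS t))) $ n = 2 * (DD t * fps_deriv (SS t)) $ n" by simp
  consider "n = 0" | "n = 1" | "n = 2" | N where "n = N + 3" 
  proof -
    have "n = 0 \<or> n = 1 \<or> n = 2 \<or> n = (n - 3) + 3" by arith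
    then show thesis using that by blast
  qed
  then show "(fps_const 2 * (DD t * fps_deriv (SS t))) $ n = (fps_deriv (DD t) * SS t) $ n"
  proof cases
    case 1 then show ?thesis unfolding l r DD_mult_nth by (simp add: fps_deriv_nth SS_nth algebra_simps)
  next
    case 2 then show ?thesis unfolding l r DD_mult_nth by (simp add: fps_deriv_nth SS_nth nar1 nar1' algebra_simps power2_eq_square)
  next
    case 3 then show ?thesis unfolding l r DD_mult_nth by (simp add: fps_deriv_nth SS_nth nar1 nar2 nar1' nar2' numeral_3_eq_3 algebra_simps power2_eq_square)
  next
    case 4
    have e: "N + 3 + 1 - 1 = N + 3" "N + 3 - 1 + 1 - 1 = N + 2" "N + 3 - 2 + 1 - 1 = N + 1" "N + 3 - 1 = N + 2" by simp_all
    have rec: "(of_nat (N+4) :: 'a) * narayana (N+3) t =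
      (1 + t) * of_nat (2*N+5) * narayana (N+2) t - (1 - t)^2 * of_nat (N+1) * narayana (N+1) t" by (rule nar_rec)
    have "(fps_const 2 * (DD t * fps_deriv (SS t))) $ n - (fps_deriv (DD t) * SS t) $ n =
      4 * t * ((of_nat (N+4) :: 'a) * narayana (N+3) t -
      ((1 + t) * of_nat (2*N+5) * narayana (N+2) t - (1 - t)^2 * of_nat (N+1) * narayana (N+1) t))"
      unfolding l r 4 by (simp add: fps_deriv_nth SS_nth e DD_mult_nth algebra_simps)
    then show ?thesis using rec by simp
  qed
qed

lemma SS_sq: "(SS t)^2 = DD t"
proof -
  define W where "W = (SS t)^2"
  define D where "D = DD t"
  define I where "I = inverse D"
  have D0: "D $ 0 = 1" by (simp add: D_def DD_nth)
  have DI: "D * I = 1" unfolding I_def using D0 by (simp add: inverse_mult_eq_1')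
  have c2: "fps_const (2::'a) = 2" by (simp add: fps_numeral_fps_const)
  have W': "fps_deriv W = fps_const 2 * SS t * fps_deriv (SS t)"
    unfolding c2 by (simp add: W_def power2_eq_square algebra_simps mult_2)
  have ode: "D * fps_deriv W = fps_deriv D * W"
  proof -
    have "D * fps_deriv W = SS t * (fps_const 2 * (DD t * fps_deriv (SS t)))"
      by (simp add: W' D_def algebra_simps)
    also have "\<dots> = fps_deriv D * W" unfolding SS_ode D_def W_def power2_eq_square by (simp add: ac_simps)
    finally show ?thesis .
  qed
  have Ider: "fps_deriv I = - fps_deriv D * I^2" unfolding I_def using D0 by (simp add: fps_inverse_deriv)
  have "fps_deriv (W * I) = I^2 * (D * fps_deriv W - fps_deriv D * W)"
  proof -
    have "fps_deriv (W * I) = fps_deriv W * I + W * fps_deriv I" by simp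
    also have "\<dots> = fps_deriv W * I * (D * I) - W * fps_deriv D * I^2" by (simp add: DI Ider algebra_simps)
    also have "\<dots> = I^2 * (D * fps_deriv W - fps_deriv D * W)" by (simp add: power2_eq_square algebra_simps)
    finally show ?thesis .
  qed
  then have "fps_deriv (W * I) = 0" using ode by simp
  then have "W * I = fps_const ((W * I) $ 0)" using fps_deriv_eq_0_iff[of "W * I"] by blast
  moreover have "(W * I) $ 0 = 1"
    by (simp add: W_def I_def D0 SS_nth power2_eq_square)
  ultimately have "W * I = 1" by simp
  then have "W * I * D = D" by simp
  then have "W = D" using DI by (simp add: mult.assoc mult.commute[of I D])
  then show ?thesis by (simp add: W_def D_def)
qed

lemma nar_t0: "narayana n (0::'a::field_char_0) = 1"
proof -
  have "narayana n (0::'a) = (\<Sum>k=0..n. if k = 0 then 1 else 0)"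
    unfolding narayana_def by (rule sum.cong) (auto simp: power_0_left)
  then show ?thesis by simp
qed

lemma quad: "fps_const t * fps_X * (GG t)^2 + (fps_const (1+t) * fps_X - 1) * GG t + fps_X = 0"
proof (cases "t = 0")
  case True
  show ?thesis
  proof (rule fps_ext)
    fix n
    show "(fps_const t * fps_X * (GG t)^2 + (fps_const (1+t) * fps_X - 1) * GG t + fps_X) $ n = 0 $ n"
      using True by (cases n) (auto simp: GG_nth nar_t0 algebra_simps)
  qed
next
  case False
  define T where "T = fps_const t"
  have c: "fps_const (2*t) = 2 * T" "fps_const (1+t) = 1 + T"
    "fps_const (2 * (1 + t)) = 2 * (1 + T)"
    by (simp_all add: T_def fps_numeral_fps_const flip: fps_const_add fps_const_mult fps_const_neg)
  have c3: "fps_const ((1-t)^2) = (1 - T)^2"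
  proof -
    have "(1 - T)^2 = fps_const (1 - t) * fps_const (1 - t)" by (simp add: T_def power2_eq_square)
    then show ?thesis by (simp add: power2_eq_square)
  qed
  have "(SS t)^2 - DD t = 4 * T * fps_X * (T * fps_X * (GG t)^2 + ((1 + T) * fps_X - 1) * GG t + fps_X)"
    unfolding SS_def DD_def c c3 by algebra
  then have "4 * T * fps_X * (T * fps_X * (GG t)^2 + ((1 + T) * fps_X - 1) * GG t + fps_X) = (SS t)^2 - DD t"
    by simp
  also have "\<dots> = 0" by (simp add: SS_sq)
  finally have "4 * T * fps_X * (T * fps_X * (GG t)^2 + ((1 + T) * fps_X - 1) * GG t + fps_X) = 0" .
  moreover have "4 * T * fps_X \<noteq> 0" using False by (simp add: T_def fps_numeral_fps_const)
  ultimately have "T * fps_X * (GG t)^2 + ((1 + T) * fps_X - 1) * GG t + fps_X = 0" by simp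
  then show ?thesis unfolding c(2) by (simp add: T_def)
qed

lemma betaF_nth: "betaF m t $ n = (if n \<le> m then rho m t n * (-1)^n else 0)"
proof -
  have "betaF m t $ n = (\<Sum>d=0..m. rho m t d * (if n = d then (-1)^d else 0))"
    unfolding betaF_def fps_sum_nth
  proof (rule sum.cong)
    fix d
    have m1: "(- 1 :: 'a fps) ^ d = fps_const ((-1)^d)" by (induct d) simp_all
    have "(- fps_X) ^ d = fps_const ((-1)^d) * (fps_X ^ d :: 'a fps)"
      unfolding m1[symmetric] by (rule power_minus)
    then show "(fps_const (rho m t d) * (- fps_X) ^ d) $ n = rho m t d * (if n = d then (-1)^d else 0)"
      by (simp only: mult.assoc[symmetric] fps_const_mult fps_mult_left_const_nth fps_X_power_nth)
         (simp add: mult.commute)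
  qed simp
  also have "\<dots> = (if n \<le> m then rho m t n * (-1)^n else 0)"
    by (simp add: if_distrib[of "\<lambda>x. rho m t _ * x"] sum.delta' cong: if_cong)
  finally show ?thesis .
qed

lemma key_alg:
  fixes P a b Yi Yr Zi Zr :: "'a::field"
  assumes "P \<noteq> 0" "P + 1 \<noteq> 0" "P * Zi = a * Yi" "P * Zr = b * Yr"
  shows "(P+1+a+b)/(P+1)*((Yi+Zi)*(Yr+Zr)) = (P+a+b)/P*(Yi*Yr) + (P+a+b)/(P+1)*((Yi+Zi)*Zr + Zi*(Yr+Zr)) - (P-1+a+b)/(P+1)*(Zi*Zr)"
proof -
  have e: "(P+1+a+b)*P*((Yi+Zi)*(Yr+Zr)) = (P+a+b)*(P+1)*(Yi*Yr) + (P+a+b)*P*((Yi+Zi)*Zr + Zi*(Yr+Zr)) - (P-1+a+b)*P*(Zi*Zr)"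
    using assms(3,4) by algebra
  have l: "(P+1+a+b)/(P+1)*((Yi+Zi)*(Yr+Zr)) = ((P+1+a+b)*P*((Yi+Zi)*(Yr+Zr))) / (P*(P+1))"
    using assms(1,2) by (simp add: divide_simps) algebra?
  have r: "(P+a+b)/P*(Yi*Yr) + (P+a+b)/(P+1)*((Yi+Zi)*Zr + Zi*(Yr+Zr)) - (P-1+a+b)/(P+1)*(Zi*Zr)
     = ((P+a+b)*(P+1)*(Yi*Yr) + (P+a+b)*P*((Yi+Zi)*Zr + Zi*(Yr+Zr)) - (P-1+a+b)*P*(Zi*Zr)) / (P*(P+1))"
    using assms(1,2) by (simp add: divide_simps) algebra?
  show ?thesis unfolding l r e ..
qed

lemma opn: "(1 + of_nat k :: 'a::field_char_0) \<noteq> 0"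
proof -
  have "(of_nat (Suc k) :: 'a) \<noteq> 0" by (metis of_nat_eq_0_iff nat.distinct(1))
  then show ?thesis by (simp only: of_nat_Suc not_False_eq_True)
qed

lemma rho_diag: "rho k t k = 1 + t ^ k"
  by (simp add: rho_def)

lemma rho_sub1: "rho (Suc k) t k = of_nat (Suc k) * (\<Sum>i=0..k. t ^ i)"
proof -
  have "(\<Sum>i=0..k. of_nat ((Suc k - 1 - k + i choose i) * (Suc k - 1 - i choose (k - i))) * t ^ i) = (\<Sum>i=0..k. t ^ i)"
    by (rule sum.cong) auto
  then show ?thesis by (simp add: rho_def opn)
qed

lemma rho_0: "rho (Suc k) t 0 = 1"
  by (simp add: rho_def opn)

lemma rho_1: "rho (k+2) t 1 = of_nat (k+2) * (1 + t)"
proof -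
  have "(\<Sum>i=0..1. of_nat ((k + 2 - 1 - 1 + i choose i) * (k + 2 - 1 - i choose (1 - i))) * t ^ i) = of_nat (k+1) * (1 + t)"
    by (simp add: algebra_simps)
  moreover have "(of_nat (k+1) :: 'a) \<noteq> 0" by (simp del: of_nat_Suc)
  ultimately show ?thesis by (simp add: rho_def del: of_nat_Suc)
qed

definition XX :: "nat \<Rightarrow> nat \<Rightarrow> 'a::field_char_0" where "XX Q i = of_nat (Q + 1 + i choose i)"
definition YY :: "nat \<Rightarrow> nat \<Rightarrow> 'a::field_char_0" where "YY Q i = of_nat (Q + i choose i)"
definition ZZ :: "nat \<Rightarrow> nat \<Rightarrow> 'a::field_char_0" where "ZZ Q i = (if i = 0 then 0 else of_nat (Q + i choose (i - 1)))"

lemma XYZ: "XX Q i = YY Q i + ZZ Q i"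
proof (cases i)
  case 0 then show ?thesis by (simp add: XX_def YY_def ZZ_def)
next
  case (Suc j)
  have "Q + 1 + i = Suc (Q + 1 + j)" "Q + i = Q + 1 + j" using Suc by simp_all
  then show ?thesis unfolding XX_def YY_def ZZ_def using Suc by (simp add: add.commute)
qed

lemma ZY: "of_nat (Q + 1) * ZZ Q i = of_nat i * (YY Q i :: 'a::field_char_0)"
proof (cases i)
  case 0 then show ?thesis by (simp add: ZZ_def)
next
  case (Suc j)
  have "(of_nat (Q + 1 + j choose Suc j) :: 'a) = of_nat (Q + 1 + j choose j) * (of_nat (Q + 1 + j) - of_nat j) / of_nat (Suc j)"
    by (rule chooseL1)
  moreover have "(of_nat (Q + 1 + j) :: 'a) - of_nat j = of_nat (Q + 1)" by simp
  moreover have "(of_nat (Suc j) :: 'a) \<noteq> 0" by (metis of_nat_eq_0_iff nat.distinct(1))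
  moreover have "Q + i = Q + 1 + j" using Suc by simp
  ultimately show ?thesis unfolding ZZ_def YY_def using Suc by (simp add: field_simps del: of_nat_Suc)
qed

lemma rho_pt:
  assumes "i \<le> d"
  shows "(of_nat (Q + d + 2) :: 'a::field_char_0) / of_nat (Q + 2) * (XX Q i * XX Q (d - i)) =
    of_nat (Q + d + 1) / of_nat (Q + 1) * (YY Q i * YY Q (d - i))
    + of_nat (Q + d + 1) / of_nat (Q + 2) * (XX Q i * ZZ Q (d - i) + ZZ Q i * XX Q (d - i))
    - of_nat (Q + d) / of_nat (Q + 2) * (ZZ Q i * ZZ Q (d - i))"
proof -
  define P where "P = (of_nat (Q + 1) :: 'a)"
  have P0: "P \<noteq> 0" unfolding P_def by (metis of_nat_eq_0_iff add_is_0 one_neq_zero)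
  have P1: "P + 1 \<noteq> 0" unfolding P_def by (metis of_nat_eq_0_iff of_nat_Suc add_is_0 one_neq_zero add.commute Suc_eq_plus1)
  have k: "(P + 1 + of_nat i + of_nat (d - i)) / (P + 1) * ((YY Q i + ZZ Q i) * (YY Q (d - i) + ZZ Q (d - i))) =
    (P + of_nat i + of_nat (d - i)) / P * (YY Q i * YY Q (d - i))
    + (P + of_nat i + of_nat (d - i)) / (P + 1) * ((YY Q i + ZZ Q i) * ZZ Q (d - i) + ZZ Q i * (YY Q (d - i) + ZZ Q (d - i)))
    - (P - 1 + of_nat i + of_nat (d - i)) / (P + 1) * (ZZ Q i * ZZ Q (d - i))"
    by (rule key_alg[OF P0 P1]) (simp_all only: P_def ZY)
  have e1: "P + 1 + of_nat i + of_nat (d - i) = of_nat (Q + d + 2)" "P + 1 = of_nat (Q + 2)"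
    "P + of_nat i + of_nat (d - i) = of_nat (Q + d + 1)" "P - 1 + of_nat i + of_nat (d - i) = of_nat (Q + d)"
    using assms unfolding P_def by (simp_all add: of_nat_diff)
  note k2 = k[unfolded e1(1), unfolded e1(2,3,4)]
  show ?thesis using k2 unfolding P_def XYZ[symmetric] .
qed

lemma rho_gen:
  fixes t :: "'a::field_char_0"
  shows "rho (Q+D+4) t (D+2) = rho (Q+D+3) t (D+2) + (1 + t) * rho (Q+D+3) t (D+1) - t * rho (Q+D+2) t D"
proof -
  define d where "d = D + 2"
  define SA where "SA = (\<Sum>i=0..d. XX Q i * XX Q (d - i) * t ^ i)"
  define SB where "SB = (\<Sum>i=0..d. YY Q i * YY Q (d - i) * t ^ i)"
  define SC where "SC = (\<Sum>i=0..d. XX Q i * ZZ Q (d - i) * t ^ i)"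
  define SC' where "SC' = (\<Sum>i=0..d. ZZ Q i * XX Q (d - i) * t ^ i)"
  define SE where "SE = (\<Sum>i=0..d. XX Q i * ZZ Q (D + 1 - i) * t ^ i)"
  define SE' where "SE' = (\<Sum>i=0..d. ZZ Q i * ZZ Q (d - i) * t ^ i)"
  have A: "rho (Q+D+4) t (D+2) = of_nat (Q + d + 2) / of_nat (Q + 2) * SA"
  proof -
    have "(\<Sum>i=0..D+2. of_nat ((Q+D+4 - 1 - (D+2) + i choose i) * (Q+D+4 - 1 - i choose (D+2 - i))) * t ^ i) = SA"
      unfolding SA_def d_def
    proof (rule sum.cong)
      fix i assume "i \<in> {0..D+2}"
      then have "Q+D+4 - 1 - (D+2) + i = Q + 1 + i" "Q+D+4 - 1 - i = Q + 1 + (D + 2 - i)" by auto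
      then show "of_nat ((Q+D+4 - 1 - (D+2) + i choose i) * (Q+D+4 - 1 - i choose (D+2 - i))) * t ^ i
         = XX Q i * XX Q (D + 2 - i) * t ^ i" by (simp add: XX_def)
    qed simp
    moreover have "Q + D + 4 - (D + 2) = Q + 2" by simp
    ultimately show ?thesis unfolding d_def by (simp add: rho_def algebra_simps)
  qed
  have B: "rho (Q+D+3) t (D+2) = of_nat (Q + d + 1) / of_nat (Q + 1) * SB"
  proof -
    have "(\<Sum>i=0..D+2. of_nat ((Q+D+3 - 1 - (D+2) + i choose i) * (Q+D+3 - 1 - i choose (D+2 - i))) * t ^ i) = SB"
      unfolding SB_def d_def
    proof (rule sum.cong)
      fix i assume "i \<in> {0..D+2}"
      then have "Q+D+3 - 1 - (D+2) + i = Q + i" "Q+D+3 - 1 - i = Q + (D + 2 - i)" by auto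
      then show "of_nat ((Q+D+3 - 1 - (D+2) + i choose i) * (Q+D+3 - 1 - i choose (D+2 - i))) * t ^ i
         = YY Q i * YY Q (D + 2 - i) * t ^ i" by (simp add: YY_def)
    qed simp
    moreover have "Q + D + 3 - (D + 2) = Q + 1" by simp
    ultimately show ?thesis unfolding d_def by (simp add: rho_def algebra_simps)
  qed
  have C: "rho (Q+D+3) t (D+1) = of_nat (Q + d + 1) / of_nat (Q + 2) * SC"
  proof -
    have "(\<Sum>i=0..D+1. of_nat ((Q+D+3 - 1 - (D+1) + i choose i) * (Q+D+3 - 1 - i choose (D+1 - i))) * t ^ i)
       = (\<Sum>i=0..D+1. XX Q i * ZZ Q (d - i) * t ^ i)"
      unfolding d_def
    proof (rule sum.cong)
      fix i assume "i \<in> {0..D+1}"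
      then have "Q+D+3 - 1 - (D+1) + i = Q + 1 + i" "Q+D+3 - 1 - i = Q + (D + 2 - i)" "D + 2 - i - 1 = D + 1 - i"
        "D + 2 - i \<noteq> 0" by auto
      then show "of_nat ((Q+D+3 - 1 - (D+1) + i choose i) * (Q+D+3 - 1 - i choose (D+1 - i))) * t ^ i
         = XX Q i * ZZ Q (D + 2 - i) * t ^ i" by (simp add: XX_def ZZ_def)
    qed simp
    also have "\<dots> = SC" unfolding SC_def d_def
      by (simp add: sum.atLeast0_atMost_Suc[of _ "D+1", simplified] ZZ_def)
    finally have "(\<Sum>i=0..D+1. of_nat ((Q+D+3 - 1 - (D+1) + i choose i) * (Q+D+3 - 1 - i choose (D+1 - i))) * t ^ i) = SC" .
    moreover have "Q + D + 3 - (D + 1) = Q + 2" by simp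
    ultimately show ?thesis unfolding d_def by (simp add: rho_def algebra_simps)
  qed
  have E: "rho (Q+D+2) t D = of_nat (Q + d) / of_nat (Q + 2) * SE"
  proof -
    have "(\<Sum>i=0..D. of_nat ((Q+D+2 - 1 - D + i choose i) * (Q+D+2 - 1 - i choose (D - i))) * t ^ i)
       = (\<Sum>i=0..D. XX Q i * ZZ Q (D + 1 - i) * t ^ i)"
    proof (rule sum.cong)
      fix i assume "i \<in> {0..D}"
      then have "Q+D+2 - 1 - D + i = Q + 1 + i" "Q+D+2 - 1 - i = Q + (D + 1 - i)" "D + 1 - i - 1 = D - i"
        "D + 1 - i \<noteq> 0" by auto
      then show "of_nat ((Q+D+2 - 1 - D + i choose i) * (Q+D+2 - 1 - i choose (D - i))) * t ^ i
         = XX Q i * ZZ Q (D + 1 - i) * t ^ i" by (simp add: XX_def ZZ_def)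
    qed simp
    also have "\<dots> = SE" unfolding SE_def d_def
      by (simp add: sum.atLeast0_atMost_Suc[of _ "D+1", simplified] sum.atLeast0_atMost_Suc[of _ "D", simplified] ZZ_def)
    finally have "(\<Sum>i=0..D. of_nat ((Q+D+2 - 1 - D + i choose i) * (Q+D+2 - 1 - i choose (D - i))) * t ^ i) = SE" .
    moreover have "Q + D + 2 - D = Q + 2" by simp
    ultimately show ?thesis unfolding d_def by (simp add: rho_def algebra_simps)
  qed
  have C': "t * SC = SC'"
  proof -
    have "t * SC = (\<Sum>i=0..d. (if i = 0 then 0 else XX Q (i - 1) * ZZ Q (d - (i - 1))) * t ^ i)"
      unfolding SC_def by (rule sum_shift[where f = "\<lambda>i. XX Q i * ZZ Q (d - i)"]) (simp add: ZZ_def)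
    also have "\<dots> = SC'" unfolding SC'_def
    proof (rule sum.cong)
      fix i assume i: "i \<in> {0..d}"
      show "(if i = 0 then 0 else XX Q (i - 1) * ZZ Q (d - (i - 1))) * t ^ i = ZZ Q i * XX Q (d - i) * t ^ i"
      proof (cases i)
        case (Suc j)
        then have "d - (i - 1) = Suc (d - i)" "Q + 1 + j = Q + i" "Q + Suc (d - i) = Q + 1 + (d - i)" using i by auto
        then show ?thesis using Suc by (simp add: XX_def ZZ_def)
      qed (simp add: ZZ_def)
    qed simp
    finally show ?thesis .
  qed
  have E': "t * SE = SE'"
  proof -
    have "t * SE = (\<Sum>i=0..d. (if i = 0 then 0 else XX Q (i - 1) * ZZ Q (D + 1 - (i - 1))) * t ^ i)"
      unfolding SE_def by (rule sum_shift[where f = "\<lambda>i. XX Q i * ZZ Q (D + 1 - i)"]) (simp add: ZZ_def d_def)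
    also have "\<dots> = SE'" unfolding SE'_def
    proof (rule sum.cong)
      fix i assume i: "i \<in> {0..d}"
      show "(if i = 0 then 0 else XX Q (i - 1) * ZZ Q (D + 1 - (i - 1))) * t ^ i = ZZ Q i * ZZ Q (d - i) * t ^ i"
      proof (cases i)
        case (Suc j)
        then have "D + 1 - (i - 1) = d - i" "Q + 1 + j = Q + i" using i by (auto simp: d_def)
        then show ?thesis using Suc by (simp add: XX_def ZZ_def)
      qed (simp add: ZZ_def)
    qed simp
    finally show ?thesis .
  qed
  have "rho (Q+D+3) t (D+2) + (1 + t) * rho (Q+D+3) t (D+1) - t * rho (Q+D+2) t D
     = of_nat (Q + d + 1) / of_nat (Q + 1) * SB + of_nat (Q + d + 1) / of_nat (Q + 2) * (SC + SC')
       - of_nat (Q + d) / of_nat (Q + 2) * SE'"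
    unfolding B C E C'[symmetric] E'[symmetric] by (simp add: algebra_simps)
  also have "\<dots> = (\<Sum>i=0..d. (of_nat (Q + d + 1) / of_nat (Q + 1) * (YY Q i * YY Q (d - i))
    + of_nat (Q + d + 1) / of_nat (Q + 2) * (XX Q i * ZZ Q (d - i) + ZZ Q i * XX Q (d - i))
    - of_nat (Q + d) / of_nat (Q + 2) * (ZZ Q i * ZZ Q (d - i))) * t ^ i)"
    unfolding SB_def SC_def SC'_def SE'_def
    by (simp add: sum_distrib_left sum.distrib sum_subtractf algebra_simps)
  also have "\<dots> = (\<Sum>i=0..d. (of_nat (Q + d + 2) / of_nat (Q + 2) * (XX Q i * XX Q (d - i))) * t ^ i)"
  proof (rule sum.cong[OF refl])
    fix i assume "i \<in> {0..d}"
    then have "i \<le> d" by simp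
    show "(of_nat (Q + d + 1) / of_nat (Q + 1) * (YY Q i * YY Q (d - i))
    + of_nat (Q + d + 1) / of_nat (Q + 2) * (XX Q i * ZZ Q (d - i) + ZZ Q i * XX Q (d - i))
    - of_nat (Q + d) / of_nat (Q + 2) * (ZZ Q i * ZZ Q (d - i))) * t ^ i =
      (of_nat (Q + d + 2) / of_nat (Q + 2) * (XX Q i * XX Q (d - i))) * t ^ i"
      by (simp only: rho_pt[OF \<open>i \<le> d\<close>, of Q])
  qed
  also have "\<dots> = rho (Q+D+4) t (D+2)"
    unfolding A SA_def by (simp add: sum_distrib_left algebra_simps)
  finally show ?thesis ..
qed

lemma geo_id:
  fixes t S :: "'a::field_char_0"
  assumes "t * S = S + t ^ (K+1) - 1"
  shows "of_nat (K+3) * (S + t^(K+1) + t^(K+2)) = 1 + t^(K+2) + (1 + t) * (of_nat (K+2) * (S + t^(K+1))) - t * (of_nat (K+1) * S)"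
proof -
  define a where "a = t^(K+1)"
  have b: "t^(K+2) = t * a" unfolding a_def by simp
  have h: "t * S = S + a - 1" using assms unfolding a_def .
  have o: "(of_nat (K+3) :: 'a) = of_nat K + 3" "(of_nat (K+2) :: 'a) = of_nat K + 2" "(of_nat (K+1) :: 'a) = of_nat K + 1" by simp_all
  show ?thesis unfolding b a_def[symmetric] o using h by algebra
qed

lemma rho_rec: "(if n \<le> M+2 then rho (M+2) t n else 0) =
   (if n \<le> M+1 then rho (M+1) t n else 0)
   + (if 1 \<le> n \<and> n \<le> M+2 then (1+t) * rho (M+1) t (n-1) else 0)
   - (if 2 \<le> n \<and> n \<le> M+2 then t * rho M t (n-2) else 0)"
proof -
  consider "n > M + 2" | "n = M + 2" | "n = M + 1" | "n \<le> M" by linarith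
  then show ?thesis
  proof cases
    case 1 then show ?thesis by simp
  next
    case 2
    have "rho (M+2) t (M+2) = 1 + t^(M+2)" "rho (M+1) t (M+1) = 1 + t^(M+1)" "rho M t M = 1 + t^M"
      by (simp_all only: rho_diag)
    then show ?thesis using 2 by (simp add: algebra_simps)
  next
    case 3
    show ?thesis
    proof (cases M)
      case 0
      have "rho (Suc (Suc 0)) t (Suc 0) = 2 * (1 + t)" using rho_1[of 0 t] by simp
      moreover have "rho 1 t 1 = 1 + t" by (simp only: rho_diag power_one_right)
      moreover have "rho 1 t 0 = 1" using rho_0[of 0 t] by simp
      ultimately show ?thesis using 3 0 by simp
    next
      case (Suc K)
      define S where "S = (\<Sum>i=0..K. t ^ i)"
      have r1: "rho (M+2) t (M+1) = of_nat (K+3) * (S + t^(K+1) + t^(K+2))"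
        using rho_sub1[of "K+2" t] unfolding Suc S_def by (simp add: sum.atLeast0_atMost_Suc algebra_simps)
      have r2: "rho (M+1) t (M+1) = 1 + t^(K+2)" unfolding Suc by (simp add: rho_diag)
      have r3: "rho (M+1) t M = of_nat (K+2) * (S + t^(K+1))"
        using rho_sub1[of "K+1" t] unfolding Suc S_def by (simp add: sum.atLeast0_atMost_Suc algebra_simps)
      have r4: "rho M t (M - 1) = of_nat (K+1) * S"
        using rho_sub1[of "K" t] unfolding Suc S_def by simp
      have h: "t * S = S + t ^ (K+1) - 1"
      proof -
        have "t * S = (\<Sum>i=0..K. t ^ Suc i)" unfolding S_def by (simp add: sum_distrib_left)
        also have "\<dots> = (\<Sum>i=0..Suc K. t ^ i) - 1"
          by (subst sum.atLeast0_atMost_Suc_shift) simp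
        also have "\<dots> = S + t ^ (K+1) - 1" unfolding S_def by simp
        finally show ?thesis .
      qed
      have e: "M + 1 - 1 = M" "M + 1 - 2 = M - 1" by simp_all
      have e2: "M + 1 - 2 = M - 1" by simp
      show ?thesis unfolding 3 e r1 r2 r3 r4 e2 using geo_id[OF h] Suc by simp
    qed
  next
    case 4
    show ?thesis
    proof (cases n)
      case 0 then show ?thesis using rho_0[of "M+1" t] rho_0[of M t] by simp
    next
      case (Suc n')
      show ?thesis
      proof (cases n')
        case 0
        obtain K where K: "M = K + 1" using 4 Suc 0 by (metis add.commute le_iff_add add_cancel_right_left One_nat_def Suc_le_eq not0_implies_Suc plus_1_eq_Suc zero_less_Suc)
        have "rho (Suc (Suc (Suc K))) t (Suc 0) = of_nat (K+3) * (1 + t)" using rho_1[of "K+1" t] by (simp add: algebra_simps)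
        moreover have "rho (Suc (Suc K)) t (Suc 0) = of_nat (K+2) * (1 + t)" using rho_1[of K t] by (simp add: algebra_simps)
        moreover have "rho (Suc (Suc K)) t 0 = 1" using rho_0[of "K+1" t] by simp
        ultimately show ?thesis using Suc 0 K by (simp add: algebra_simps)
      next
        case (Suc D)
        then have nD: "n = D + 2" using \<open>n = Suc n'\<close> by simp
        obtain Q where Q: "M = Q + D + 2" using 4 nD by (metis add.commute le_iff_add add.assoc)
        have "rho (Q+D+4) t (D+2) = rho (Q+D+3) t (D+2) + (1 + t) * rho (Q+D+3) t (D+1) - t * rho (Q+D+2) t D"
          by (rule rho_gen)
        then have g: "rho (M+2) t n = rho (M+1) t n + (1+t) * rho (M+1) t (n-1) - t * rho M t (n-2)"
          unfolding Q nD by (simp add: eval_nat_numeral)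
        show ?thesis using g 4 nD by simp
      qed
    qed
  qed
qed

lemma betaF_rec: "betaF (M+2) t = (1 - fps_const (1+t) * fps_X) * betaF (M+1) t - fps_const t * fps_X^2 * betaF M t"
proof (rule fps_ext)
  fix n
  have e: "(1 - fps_const (1+t) * fps_X) * betaF (M+1) t - fps_const t * fps_X^2 * betaF M t
     = betaF (M+1) t - fps_const (1+t) * (fps_X * betaF (M+1) t) - fps_const t * (fps_X^2 * betaF M t)"
    by (simp add: algebra_simps)
  have r: "(betaF (M+1) t - fps_const (1+t) * (fps_X * betaF (M+1) t) - fps_const t * (fps_X^2 * betaF M t)) $ n
     = betaF (M+1) t $ n - (1+t) * (if n = 0 then 0 else betaF (M+1) t $ (n-1)) - t * (if n < 2 then 0 else betaF M t $ (n-2))"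
    by (simp add: fps_X_power_mult_nth)
  have "betaF (M+2) t $ n = betaF (M+1) t $ n - (1+t) * (if n = 0 then 0 else betaF (M+1) t $ (n-1)) - t * (if n < 2 then 0 else betaF M t $ (n-2))"
  proof (cases n)
    case 0
    then show ?thesis using rho_rec[of 0 M t] by (simp add: betaF_nth)
  next
    case (Suc k)
    show ?thesis
    proof (cases k)
      case 0
      then show ?thesis using rho_rec[of 1 M t] Suc by (simp add: betaF_nth algebra_simps)
    next
      case (Suc j)
      have "(if n \<le> M+2 then rho (M+2) t n else 0) * (-1)^n =
        ((if n \<le> M+1 then rho (M+1) t n else 0)
        + (if 1 \<le> n \<and> n \<le> M+2 then (1+t) * rho (M+1) t (n-1) else 0)
        - (if 2 \<le> n \<and> n \<le> M+2 then t * rho M t (n-2) else 0)) * (-1)^n"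
        using rho_rec[of n M t] by simp
      then show ?thesis using Suc \<open>n = Suc k\<close> by (auto simp: betaF_nth algebra_simps split: if_splits)
    qed
  qed
  then show "betaF (M+2) t $ n = ((1 - fps_const (1+t) * fps_X) * betaF (M+1) t - fps_const t * fps_X^2 * betaF M t) $ n"
    unfolding e r .
qed

lemma betaF_0: "betaF 0 t = 2"
  by (rule fps_ext) (simp add: betaF_nth rho_def fps_numeral_nth)

lemma betaF_1: "betaF 1 t = 1 - fps_const (1+t) * fps_X"
proof (rule fps_ext)
  fix n
  show "betaF 1 t $ n = (1 - fps_const (1+t) * fps_X) $ n"
    by (cases n) (auto simp: betaF_nth rho_def)
qed

lemma key_fps:
  fixes t :: "'a::field_char_0"
  shows "betaF m t * (GG t)^m = fps_X^m + fps_const (t^m) * fps_X^m * (GG t)^(2*m)"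
proof -
  define G where "G = GG t"
  define H where "H = fps_shift 1 G"
  define V where "V = inverse H"
  define u where "u = fps_const t * fps_X * G"
  have G0: "G $ 0 = 0" by (simp add: G_def GG_nth)
  have GXH: "G = fps_X * H"
  proof (rule fps_ext)
    fix n show "G $ n = (fps_X * H) $ n" using G0 by (cases n) (simp_all add: H_def)
  qed
  have H0: "H $ 0 = 1" by (simp add: H_def G_def GG_nth nar1')
  have HV: "H * V = 1" unfolding V_def using H0 by (simp add: inverse_mult_eq_1')
  have q: "fps_const t * fps_X * G^2 + (fps_const (1+t) * fps_X - 1) * G + fps_X = 0"
    using quad[of t] by (simp add: G_def)
  have "fps_X * (fps_const t * fps_X * G * H + (fps_const (1+t) * fps_X - 1) * H + 1) = 0"
    using q unfolding GXH by (simp add: algebra_simps power2_eq_square)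
  then have q2: "fps_const t * fps_X * G * H + (fps_const (1+t) * fps_X - 1) * H + 1 = 0" by simp
  have "V * (fps_const t * fps_X * G * H + (fps_const (1+t) * fps_X - 1) * H + 1) =
     (fps_const t * fps_X * G) * (H * V) + (fps_const (1+t) * fps_X - 1) * (H * V) + V"
    by (simp add: algebra_simps)
  also have "\<dots> = u + (fps_const (1+t) * fps_X - 1) + V" unfolding HV u_def by simp
  finally have "u + (fps_const (1+t) * fps_X - 1) + V = V * (fps_const t * fps_X * G * H + (fps_const (1+t) * fps_X - 1) * H + 1)" ..
  also have "\<dots> = 0" unfolding q2 by simp
  finally have z: "u + (fps_const (1+t) * fps_X - 1) + V = 0" .
  have s: "u + V = 1 - fps_const (1+t) * fps_X"
  proof -
    have "u + V = (u + (fps_const (1+t) * fps_X - 1) + V) + (1 - fps_const (1+t) * fps_X)" by (simp add: algebra_simps)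
    then show ?thesis unfolding z by simp
  qed
  have p: "u * V = fps_const t * fps_X^2"
  proof -
    have "u * V = fps_const t * fps_X * fps_X * (H * V)" unfolding u_def GXH by (simp add: algebra_simps)
    then show ?thesis using HV by (simp add: power2_eq_square)
  qed
  have b: "betaF n t = u^n + V^n" for n
  proof (induction n rule: less_induct)
    case (less n)
    show ?case
    proof (cases n)
      case 0 then show ?thesis by (simp add: betaF_0)
    next
      case (Suc k)
      show ?thesis
      proof (cases k)
        case 0 then show ?thesis using Suc s betaF_1[of t] by simp
      next
        case (Suc j)
        then have n: "n = j + 2" using \<open>n = Suc k\<close> by simp
        have "betaF n t = (u + V) * (u^(j+1) + V^(j+1)) - (u * V) * (u^j + V^j)"
          unfolding n betaF_rec s[symmetric] p[symmetric] using less n by simp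
        also have "\<dots> = u^n + V^n" unfolding n by (simp add: algebra_simps power2_eq_square)
        finally show ?thesis .
      qed
    qed
  qed
  have "betaF m t * G^m = u^m * G^m + (V * G)^m" by (simp add: b algebra_simps power_mult_distrib)
  also have "V * G = fps_X" unfolding GXH using HV by (simp add: algebra_simps)
  also have "u^m * G^m = fps_const (t^m) * fps_X^m * G^(2*m)"
  proof -
    have "G^(2*m) = G^m * G^m" by (simp add: mult_2 power_add)
    then show ?thesis unfolding u_def by (simp add: power_mult_distrib algebra_simps)
  qed
  finally show ?thesis by (simp add: G_def algebra_simps)
qed

theorem corollary5p2:
  fixes m :: nat and m0 :: int and t :: "'a::field_char_0"
  assumes "m \<ge> 1"
  shows "(0 :: 'a fls) =
     - fls_X_intpow (int m - m0)
     + fps_to_fls (betaF m t) * FF m m0 t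
     - fls_const (t ^ m) * fls_X_intpow (int m + m0) * (FF m m0 t) ^ 2"
proof -
  define g where "g = fps_to_fls ((GG t)^m)"
  define B where "B = fps_to_fls (betaF m t)"
  define A where "A = (fls_X :: 'a fls) ^ m"
  define Y where "Y = (fls_X_intpow (- m0) :: 'a fls)"
  define c where "c = (fls_const (t ^ m) :: 'a fls)"
  have k: "B * g = A + c * A * g^2"
  proof -
    have "fps_to_fls (betaF m t * (GG t)^m) = fps_to_fls (fps_X^m + fps_const (t^m) * fps_X^m * (GG t)^(2*m))"
      by (simp only: key_fps)
    moreover have "(GG t)^(2*m) = ((GG t)^m)^2" by (simp add: power_mult[symmetric] mult.commute)
    ultimately show ?thesis
      unfolding B_def g_def A_def c_def by (simp add: fls_times_fps_to_fls fps_to_fls_power)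
  qed
  have F: "FF m m0 t = Y * g"
    unfolding FF_def Y_def g_def GG_def using fls_X_intpow_times_conv_shift(1)[of "-m0" "fps_to_fls ((gammaF t - 1) ^ m)"] by simp
  have A1: "A = fls_X_intpow (int m)" unfolding A_def by (simp add: fls_X_power_conv_shift_1)
  have e1: "fls_X_intpow (int m - m0) = A * Y"
    unfolding A1 Y_def using fls_X_intpow_times_fls_X_intpow[where 'a='a, of "int m" "-m0"] by simp
  have e2: "fls_X_intpow (int m + m0) * Y^2 = A * Y"
  proof -
    have "Y^2 = fls_X_intpow (of_nat 2 * (- m0))" unfolding Y_def by (rule fls_X_intpow_power)
    moreover have "fls_X_intpow (int m + m0) * fls_X_intpow (of_nat 2 * (- m0)) = (fls_X_intpow (int m + m0 + of_nat 2 * (- m0)) :: 'a fls)"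
      by (rule fls_X_intpow_times_fls_X_intpow)
    moreover have "int m + m0 + of_nat 2 * (- m0) = int m - m0" by simp
    ultimately show ?thesis using e1 by simp
  qed
  have "- fls_X_intpow (int m - m0) + B * FF m m0 t - c * fls_X_intpow (int m + m0) * (FF m m0 t) ^ 2
      = - A * Y + Y * (B * g) - c * g^2 * (fls_X_intpow (int m + m0) * Y^2)"
    unfolding e1 F by (simp add: algebra_simps power2_eq_square)
  also have "\<dots> = 0" unfolding k e2 by (simp add: algebra_simps)
  finally show ?thesis unfolding B_def c_def by simp
qed

end
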